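(* Fix $k\ge1$. Let $\mathbf{P},\mathbf{Q}:(\mathbb{Z}/2\mathbb{Z})^k\to\mathbb{R}[x]$ be such that $P_{1\alpha}=Q_{1\alpha}$ for all $\alpha\in(\mathbb{Z}/2\mathbb{Z})^{k-1}$, and $P_{1\alpha}\not\equiv0$ for at least one $\alpha$. Define $\mathbf{S}:(\mathbb{Z}/2\mathbb{Z})^k\to\mathbb{R}[x]$ by $S_\alpha=P_\alpha+Q_\alpha$ if $\alpha_1=0$ and $S_\alpha=P_\alpha$ if $\alpha_1=1$. If $\mathbf{P}$ and $\mathbf{Q}$ are interpolatory $k$-cubes, then $\mathbf{S}$ is an interpolatory $k$-cube.
   Context: Elements of $(\mathbb{Z}/2\mathbb{Z})^k$ are strings $\alpha=\alpha_1\cdots\alpha_k$, and $\eta(i)$ has a single $1$ in coordinate $i$. Interpolation operators. For $\lambda,\rho\ge0$, ${}_1\mathrm{I}^\rho_\lambda$ maps $\mathbf{P}:(\mathbb{Z}/2\mathbb{Z})^k\to\mathbb{R}[x]$ to $\mathbf{Q}:(\mathbb{Z}/2\mathbb{Z})^{k-1}\to\mathbb{R}[x]$ with $Q_\alpha=\lambda P_{1\alpha}+\rho P_{0\alpha}$. For $k$-tuples $\lambda,\rho$ of nonnegative reals, $\mathbb{I}^\rho_\lambda={}_1\mathrm{I}^{\rho_k}_{\lambda_k}\cdots{}_1\mathrm{I}^{\rho_1}_{\lambda_1}$, which yields a single polynomial. Flip operators. $(\Phi_i\mathbf{P})_\alpha=xP_{\alpha+\eta(i)}$ if $\alpha_i=0$,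 and $=P_{\alpha+\eta(i)}$ if $\alpha_i=1$. $\Phi_S=\prod_{i\in S}\Phi_i$. Interpolatory $k$-cubes. $\mathbf{P}$ is an interpolatory $k$-cube if, for all $k$-tuples $\lambda,\rho$ of positive reals and all $S\subseteq\{1,\ldots,k\}$, $\mathbb{I}^\rho_\lambda\Phi_S\mathbf{P}$ is standard (i.e. $\equiv0$ or has positive leading coefficient) and has only nonpositive zeros (i.e. is $\equiv0$ or has all zeros real and $\le0$). *)

theory Defs
  imports "HOL-Computational_Algebra.Polynomial" "HOL-Library.Complex_Order" Complex_Main
begin

text \<open>Elements of (Z/2Z)^k are bool lists of length k (True = 1, False = 0);
  coordinate i (1-based in the paper) is list index i-1. A map
  (Z/2Z)^k -> R[x] is a function bool list => real poly, of which only the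
  values on lists of length k matter.\<close>

type_synonym cube = "bool list \<Rightarrow> real poly"

definition interp1 :: "real \<Rightarrow> real \<Rightarrow> cube \<Rightarrow> cube" where
  "interp1 l r P = (\<lambda>\<alpha>. smult l (P (True # \<alpha>)) + smult r (P (False # \<alpha>)))"

text \<open>Full interpolation I^rho_lambda = 1I^{rho_k}_{lambda_k} ... 1I^{rho_1}_{lambda_1};
  lambda_i, rho_i are given by l (i-1), r (i-1).\<close>
fun interp :: "nat \<Rightarrow> (nat \<Rightarrow> real) \<Rightarrow> (nat \<Rightarrow> real) \<Rightarrow> cube \<Rightarrow> real poly" where
  "interp 0 l r P = P []"
| "interp (Suc n) l r P =
     interp n (\<lambda>i. l (Suc i)) (\<lambda>i. r (Suc i)) (interp1 (l 0) (r 0) P)"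

definition flip :: "nat \<Rightarrow> cube \<Rightarrow> cube" where
  "flip i P = (\<lambda>\<alpha>. if \<alpha> ! i then P (\<alpha>[i := False])
                   else [:0, 1:] * P (\<alpha>[i := True]))"

text \<open>Phi_S = product of Phi_i over i in S (the Phi_i commute).\<close>
definition flipS :: "nat set \<Rightarrow> cube \<Rightarrow> cube" where
  "flipS S P = foldr flip (sorted_list_of_set S) P"

definition standard :: "real poly \<Rightarrow> bool" where
  "standard p \<longleftrightarrow> p = 0 \<or> lead_coeff p > 0"

definition nonpos_zeros :: "real poly \<Rightarrow> bool" where
  "nonpos_zeros p \<longleftrightarrow> p = 0 \<or>
     (\<forall>z::complex. poly (map_poly of_real p) z = 0 \<longrightarrow> Im z = 0 \<and> Re z \<le> 0)"

definition interpolatory_cube :: "nat \<Rightarrow> cube \<Rightarrow> bool" where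
  "interpolatory_cube k P \<longleftrightarrow>
     (\<forall>l r. (\<forall>i<k. l i > 0 \<and> r i > 0) \<longrightarrow>
        (\<forall>S. S \<subseteq> {..<k} \<longrightarrow>
           standard (interp k l r (flipS S P)) \<and> nonpos_zeros (interp k l r (flipS S P))))"

end

theory Submission
  imports Defs "HOL-Analysis.Complex_Transcendental" "HOL-Computational_Algebra.Fundamental_Theorem_Algebra"
begin

abbreviation pc :: "real poly \<Rightarrow> complex poly" where "pc p \<equiv> map_poly complex_of_real p"

lemma pc_add: "pc (p + q) = pc p + pc q"
  by (rule poly_eqI) (simp add: coeff_map_poly)

lemma pc_smult: "pc (smult c p) = smult (of_real c) (pc p)"
  by (rule poly_eqI) (simp add: coeff_map_poly)

lemma poly_pc_mult: "poly (pc (p * q)) z = poly (pc p) z * poly (pc q) z"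
proof (induction p)
  case 0 then show ?case by simp
next
  case (pCons a p)
  have "pc (pCons a p * q) = pc (smult a q) + pc (pCons 0 (p * q))" by (simp add: pc_add)
  then show ?case using pCons by (simp add: pc_smult map_poly_pCons algebra_simps)
qed

lemma poly_pc_add: "poly (pc (p + q)) z = poly (pc p) z + poly (pc q) z"
  by (simp add: pc_add)

lemma poly_pc_smult: "poly (pc (smult c p)) z = of_real c * poly (pc p) z"
  by (simp add: pc_smult)

lemma poly_pc_of_real: "poly (pc p) (of_real x) = of_real (poly p x)"
  by (induction p) (auto simp: map_poly_pCons)

lemma poly_pc_cnj: "poly (pc p) (cnj z) = cnj (poly (pc p) z)"
  by (subst poly_cnj_real) (auto simp: coeff_map_poly)

lemma pc_eq_0_iff: "pc p = 0 \<longleftrightarrow> p = 0"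
  by (simp add: map_poly_eq_0_iff)

definition nonneg :: "real poly \<Rightarrow> bool" where "nonneg p \<longleftrightarrow> (\<forall>j. coeff p j \<ge> 0)"
definition good :: "real poly \<Rightarrow> bool" where "good p \<longleftrightarrow> standard p \<and> nonpos_zeros p"

abbreviation lin :: "real \<Rightarrow> real poly" where "lin \<rho> \<equiv> [:-\<rho>, 1:]"

lemma factor_real:
  assumes "p \<noteq> 0" "\<forall>z. poly (pc p) z = 0 \<longrightarrow> Im z = 0 \<and> Re z \<le> 0"
  shows "\<exists>S. (\<forall>\<rho>\<in>set S. \<rho> \<le> 0) \<and> p = smult (lead_coeff p) (\<Prod>\<rho>\<leftarrow>S. lin \<rho>)"
  using assms
proof (induction "degree p" arbitrary: p rule: less_induct)
  case less
  show ?case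
  proof (cases "degree p = 0")
    case True
    then obtain a where "p = [:a:]" by (elim degree_eq_zeroE)
    then show ?thesis by (intro exI[of _ "[]"]) simp
  next
    case False
    have "\<not> (\<exists>a l. a \<noteq> 0 \<and> l = 0 \<and> pc p = pCons a l)"
    proof
      assume "\<exists>a l. a \<noteq> 0 \<and> l = 0 \<and> pc p = pCons a l"
      then have "degree (pc p) = 0" by auto
      with False show False by (simp add: degree_map_poly)
    qed
    from fundamental_theorem_of_algebra_alt[OF this] obtain z where z: "poly (pc p) z = 0" by blast
    with less.prems have zr: "Im z = 0" "Re z \<le> 0" by auto
    define \<rho> where "\<rho> = Re z"
    have "z = of_real \<rho>" using zr by (simp add: \<rho>_def complex_eq_iff)
    with z have "poly p \<rho> = 0" by (simp add: poly_pc_of_real)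
    then have "lin \<rho> dvd p" by (simp add: poly_eq_0_iff_dvd)
    then obtain q where pq: "p = lin \<rho> * q" by (elim dvdE)
    have q0: "q \<noteq> 0" using pq less.prems by auto
    have "degree p = degree (lin \<rho>) + degree q" unfolding pq by (rule degree_mult_eq) (use q0 in auto)
    then have dq: "degree q < degree p" by simp
    have "\<forall>w. poly (pc q) w = 0 \<longrightarrow> Im w = 0 \<and> Re w \<le> 0"
    proof (intro allI impI)
      fix w assume "poly (pc q) w = 0"
      then have "poly (pc p) w = 0" unfolding pq by (simp only: poly_pc_mult) simp
      then show "Im w = 0 \<and> Re w \<le> 0" using less.prems by auto
    qed
    from less.hyps[OF dq q0 this] obtain S where S: "\<forall>\<rho>\<in>set S. \<rho> \<le> 0" "q = smult (lead_coeff q) (\<Prod>\<rho>\<leftarrow>S. lin \<rho>)" by blast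
    have lc: "lead_coeff p = lead_coeff q" unfolding pq by (simp only: lead_coeff_mult) simp
    show ?thesis
    proof (intro exI[of _ "\<rho> # S"] conjI)
      show "\<forall>\<rho>'\<in>set (\<rho> # S). \<rho>' \<le> 0" using S zr \<rho>_def by auto
      have "p = lin \<rho> * q" by (rule pq)
      also have "q = smult (lead_coeff q) (\<Prod>\<rho>\<leftarrow>S. lin \<rho>)" by (rule S(2))
      finally show "p = smult (lead_coeff p) (\<Prod>\<rho>\<leftarrow>\<rho> # S. lin \<rho>)"
        unfolding lc by (simp only: list.map prod_list.Cons mult_smult_right)
    qed
  qed
qed

lemma nonneg_mult: "nonneg p \<Longrightarrow> nonneg q \<Longrightarrow> nonneg (p * q)"
  unfolding nonneg_def coeff_mult by (auto intro!: sum_nonneg mult_nonneg_nonneg)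

lemma nonneg_lin: "\<rho> \<le> 0 \<Longrightarrow> nonneg (lin \<rho>)"
  unfolding nonneg_def by (auto simp: coeff_pCons split: nat.split)

lemma nonneg_prod: "\<forall>\<rho>\<in>set S. \<rho> \<le> 0 \<Longrightarrow> nonneg (\<Prod>\<rho>\<leftarrow>S. lin \<rho>)"
proof (induction S)
  case Nil then show ?case by (simp add: nonneg_def coeff_1)
next
  case (Cons a S)
  then have "nonneg (lin a * prod_list (map lin S))" by (intro nonneg_mult nonneg_lin) auto
  then show ?case by (simp only: list.map prod_list.Cons)
qed

lemma nonneg_smult: "c \<ge> 0 \<Longrightarrow> nonneg p \<Longrightarrow> nonneg (smult c p)"
  unfolding nonneg_def by simp

lemma nonneg_add: "nonneg p \<Longrightarrow> nonneg q \<Longrightarrow> nonneg (p + q)"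
  unfolding nonneg_def by simp

lemma good_factor:
  assumes "good p" "p \<noteq> 0"
  shows "lead_coeff p > 0 \<and> (\<exists>S. (\<forall>\<rho>\<in>set S. \<rho> \<le> 0) \<and> p = smult (lead_coeff p) (\<Prod>\<rho>\<leftarrow>S. lin \<rho>))"
  using assms factor_real unfolding good_def standard_def nonpos_zeros_def by blast

lemma good_nonneg: "good p \<Longrightarrow> nonneg p"
proof (cases "p = 0")
  case True then show ?thesis by (simp add: nonneg_def)
next
  case False
  assume g: "good p"
  from good_factor[OF g False] obtain S where "lead_coeff p > 0" "\<forall>\<rho>\<in>set S. \<rho> \<le> 0"
    "p = smult (lead_coeff p) (\<Prod>\<rho>\<leftarrow>S. lin \<rho>)" by blast
  then show ?thesis by (metis less_imp_le nonneg_prod nonneg_smult)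
qed

lemma poly_pc_prod: "poly (pc (smult C (\<Prod>\<rho>\<leftarrow>S. lin \<rho>))) z = of_real C * (\<Prod>\<rho>\<leftarrow>S. z - of_real \<rho>)"
proof (induction S)
  case Nil then show ?case by (simp add: poly_pc_smult map_poly_pCons)
next
  case (Cons a S)
  have "smult C (\<Prod>\<rho>\<leftarrow>a # S. lin \<rho>) = lin a * smult C (\<Prod>\<rho>\<leftarrow>S. lin \<rho>)" by simp
  then show ?case using Cons by (simp only: poly_pc_mult) (simp add: map_poly_pCons)
qed

lemma nonneg_lead: "nonneg p \<Longrightarrow> p \<noteq> 0 \<Longrightarrow> lead_coeff p > 0"
  unfolding nonneg_def by (metis leading_coeff_0_iff order_le_less)

lemma nonneg_poly_pos: assumes "nonneg p" "p \<noteq> 0" "x > 0" shows "poly p x > 0"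
proof -
  have "poly p x = (\<Sum>i\<le>degree p. coeff p i * x ^ i)" by (simp add: poly_altdef)
  also have "\<dots> \<ge> coeff p (degree p) * x ^ degree p"
    by (rule member_le_sum) (use assms in \<open>auto simp: nonneg_def\<close>)
  finally show ?thesis using nonneg_lead[OF assms(1,2)] assms(3) by (smt (verit) zero_less_power mult_pos_pos)
qed

definition K :: "real poly \<Rightarrow> real poly \<Rightarrow> bool" where
  "K a b \<longleftrightarrow> (\<forall>lw \<rho>. lw > 0 \<longrightarrow> \<rho> > 0 \<longrightarrow>
      good (smult lw a + smult \<rho> b) \<and> good (smult lw b + smult \<rho> ([:0,1:] * a)))"

lemma two_weight:
  fixes x y :: real
  assumes "\<forall>lw \<rho>. lw > 0 \<longrightarrow> \<rho> > 0 \<longrightarrow> lw * x + \<rho> * y \<ge> 0"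
  shows "x \<ge> 0"
proof (rule ccontr)
  assume "\<not> x \<ge> 0"
  then have x: "x < 0" by simp
  define \<rho> where "\<rho> = - x / (2 * (\<bar>y\<bar> + 1))"
  have \<rho>: "\<rho> > 0" using x unfolding \<rho>_def by (smt (verit) divide_pos_pos abs_ge_zero)
  have "\<rho> * y \<le> \<rho> * \<bar>y\<bar>" using \<rho> by (simp add: mult_left_mono)
  also have "\<rho> * \<bar>y\<bar> < -x / 2"
    using x by (simp add: \<rho>_def field_simps)
  finally have "1 * x + \<rho> * y < 0" using x by simp
  with assms \<rho> show False by (meson not_le zero_less_one)
qed

lemma nonneg_two_weight:
  assumes "\<forall>lw \<rho>. lw > 0 \<longrightarrow> \<rho> > 0 \<longrightarrow> nonneg (smult lw p + smult \<rho> q)"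
  shows "nonneg p \<and> nonneg q"
proof -
  have "coeff p j \<ge> 0 \<and> coeff q j \<ge> 0" for j
  proof
    have h: "\<forall>lw \<rho>. lw > 0 \<longrightarrow> \<rho> > 0 \<longrightarrow> lw * coeff p j + \<rho> * coeff q j \<ge> 0"
      using assms unfolding nonneg_def by (metis coeff_add coeff_smult)
    show "coeff p j \<ge> 0" by (rule two_weight[OF h])
    have "\<forall>lw \<rho>. lw > 0 \<longrightarrow> \<rho> > 0 \<longrightarrow> lw * coeff q j + \<rho> * coeff p j \<ge> 0"
      by (intro allI impI) (metis h add.commute)
    then show "coeff q j \<ge> 0" by (rule two_weight)
  qed
  then show ?thesis unfolding nonneg_def by auto
qed

lemma K_nonneg: "K a b \<Longrightarrow> nonneg a \<and> nonneg b"
  by (rule nonneg_two_weight) (auto simp: K_def intro: good_nonneg)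

lemma nonneg_comb_nz:
  assumes "nonneg a" "nonneg b" "a \<noteq> 0" "t > 0" "s \<ge> 0"
  shows "smult t a + smult s b \<noteq> 0"
proof
  assume h: "smult t a + smult s b = 0"
  have "coeff a j = 0" for j
  proof -
    have "t * coeff a j + s * coeff b j = 0" using h by (metis coeff_add coeff_smult coeff_0)
    moreover have "coeff a j \<ge> 0" "coeff b j \<ge> 0" using assms by (auto simp: nonneg_def)
    ultimately show ?thesis using assms(4,5)
      by (smt (verit) mult_nonneg_nonneg mult_pos_pos)
  qed
  then show False using assms(3) by (simp add: poly_eq_iff)
qed

lemma prod_mono_im:
  fixes S :: "real list"
  assumes "\<bar>y\<bar> \<le> \<bar>y'\<bar>"
  shows "cmod (\<Prod>\<rho>\<leftarrow>S. Complex x y - of_real \<rho>) \<le> cmod (\<Prod>\<rho>\<leftarrow>S. Complex x y' - of_real \<rho>)"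
proof (induction S)
  case Nil then show ?case by simp
next
  case (Cons a S)
  have "cmod (Complex x y - of_real a) \<le> cmod (Complex x y' - of_real a)"
  proof -
    have "(x - a)\<^sup>2 + y\<^sup>2 \<le> (x - a)\<^sup>2 + y'\<^sup>2" using assms
      by (simp add: abs_le_square_iff)
    then show ?thesis by (simp add: cmod_def)
  qed
  then show ?case using Cons by (simp add: norm_mult mult_mono)
qed

lemma good_mono_im:
  assumes "good p" "\<bar>y\<bar> \<le> \<bar>y'\<bar>"
  shows "cmod (poly (pc p) (Complex x y)) \<le> cmod (poly (pc p) (Complex x y'))"
proof (cases "p = 0")
  case True then show ?thesis by simp
next
  case False
  from good_factor[OF assms(1) False] obtain S where
    S: "p = smult (lead_coeff p) (\<Prod>\<rho>\<leftarrow>S. lin \<rho>)" by blast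
  have "cmod (poly (pc p) (Complex x y)) = \<bar>lead_coeff p\<bar> * cmod (\<Prod>\<rho>\<leftarrow>S. Complex x y - of_real \<rho>)"
    by (subst S, simp only: poly_pc_prod norm_mult norm_of_real)
  also have "\<dots> \<le> \<bar>lead_coeff p\<bar> * cmod (\<Prod>\<rho>\<leftarrow>S. Complex x y' - of_real \<rho>)"
    by (rule mult_left_mono[OF prod_mono_im[OF assms(2)]]) simp
  also have "\<dots> = cmod (poly (pc p) (Complex x y'))"
    by (subst (2) S, simp only: poly_pc_prod norm_mult norm_of_real)
  finally show ?thesis .
qed

lemma infinite_segment_zero:
  fixes q :: "complex poly"
  assumes "y0 \<noteq> 0" "\<forall>y\<in>{0..\<bar>y0\<bar>}. poly q (Complex x0 y) = 0"
  shows "q = 0"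
proof (rule ccontr)
  assume "q \<noteq> 0"
  then have fin: "finite {z. poly q z = 0}" by (rule poly_roots_finite)
  have "(\<lambda>y. Complex x0 y) ` {0..\<bar>y0\<bar>} \<subseteq> {z. poly q z = 0}" using assms(2) by auto
  then have "finite ((\<lambda>y. Complex x0 y) ` {0..\<bar>y0\<bar>})" using fin finite_subset by blast
  moreover have "inj_on (\<lambda>y. Complex x0 y) {0..\<bar>y0\<bar>}" by (auto simp: inj_on_def)
  ultimately have "finite {0..\<bar>y0\<bar>}" using finite_imageD by blast
  then show False using assms(1) infinite_Icc[of 0 "\<bar>y0\<bar>"] by simp
qed

lemma pos_small: fixes u v :: real assumes "\<forall>t>0. t * u \<le> v" "u \<ge> 0" shows "u = 0"
proof (rule ccontr)
  assume "u \<noteq> 0" then have u: "u > 0" using assms(2) by simp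
  have t: "(\<bar>v\<bar> + 1) / u > 0" using u by (simp add: add_pos_nonneg)
  from assms(1) t have "((\<bar>v\<bar> + 1) / u) * u \<le> v" by blast
  then have "\<bar>v\<bar> + 1 \<le> v" using u by simp
  then show False using abs_ge_self[of v] by linarith
qed

lemma pos_small2: fixes u v :: real assumes "\<forall>t>0. u \<le> t * v" "u \<ge> 0" "v \<ge> 0" shows "u = 0"
proof (rule ccontr)
  assume "u \<noteq> 0" then have u: "u > 0" using assms(2) by simp
  have t: "u / (2 * (v + 1)) > 0" using u assms(3) by (simp add: add_pos_nonneg)
  from assms(1) t have "u \<le> (u / (2 * (v + 1))) * v" by blast
  moreover have "(u / (2 * (v + 1))) * v < u"
  proof -
    have d: "2 * (v + 1) > 0" using assms(3) by simp
    have "u * v < u * (2 * (v + 1))" using u assms(3) by (intro mult_strict_left_mono) auto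
    then show ?thesis using d by (simp add: field_simps)
  qed
  ultimately show False by simp
qed

lemma K_good:
  assumes K: "K a b" and a0: "a \<noteq> 0"
  shows "good a \<and> good b"
proof -
  from K_nonneg[OF K] have na: "nonneg a" and nb: "nonneg b" by auto
  have gF: "good (smult t a + smult 1 b)" if "t > 0" for t using K that zero_less_one unfolding K_def by blast
  have evF: "poly (pc (smult t a + smult 1 b)) z = of_real t * poly (pc a) z + poly (pc b) z" for t z
    by (simp add: poly_pc_add poly_pc_smult)
  have monoF: "cmod (of_real t * poly (pc a) (Complex x0 y) + poly (pc b) (Complex x0 y))
      \<le> cmod (of_real t * poly (pc a) (Complex x0 y0) + poly (pc b) (Complex x0 y0))"
    if "t > 0" "y \<in> {0..\<bar>y0\<bar>}" for t x0 y y0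
  proof -
    have "\<bar>y\<bar> \<le> \<bar>y0\<bar>" using that(2) by auto
    from good_mono_im[OF gF[OF that(1)] this, of x0] show ?thesis by (simp only: evF)
  qed
  have nzr: "Im z = 0 \<and> Re z \<le> 0" if "nonneg p" "p \<noteq> 0" "\<forall>z. Im z \<noteq> 0 \<longrightarrow> poly (pc p) z \<noteq> 0"
      "poly (pc p) z = 0" for p z
  proof -
    have "Im z = 0" using that by blast
    then have zz: "z = of_real (Re z)" by (simp add: complex_eq_iff)
    have "Re z \<le> 0"
    proof (rule ccontr)
      assume "\<not> Re z \<le> 0"
      then have "poly p (Re z) > 0" using nonneg_poly_pos that by simp
      moreover have "poly p (Re z) = 0" using that(4) zz poly_pc_of_real
        by (metis of_real_eq_0_iff)
      ultimately show False by simp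
    qed
    with \<open>Im z = 0\<close> show ?thesis by simp
  qed
  have A: "\<forall>z. Im z \<noteq> 0 \<longrightarrow> poly (pc a) z \<noteq> 0"
  proof (intro allI impI notI)
    fix z assume z: "Im z \<noteq> 0" "poly (pc a) z = 0"
    define x0 y0 where "x0 = Re z" and "y0 = Im z"
    have zc: "z = Complex x0 y0" by (simp add: x0_def y0_def)
    have "\<forall>y\<in>{0..\<bar>y0\<bar>}. poly (pc a) (Complex x0 y) = 0"
    proof
      fix y assume y: "y \<in> {0..\<bar>y0\<bar>}"
      have "\<forall>t>0. t * cmod (poly (pc a) (Complex x0 y)) \<le> cmod (poly (pc b) z) + cmod (poly (pc b) (Complex x0 y))"
      proof (intro allI impI)
        fix t :: real assume t: "t > 0"
        have "t * cmod (poly (pc a) (Complex x0 y)) = cmod (of_real t * poly (pc a) (Complex x0 y))"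
          using t by (simp add: norm_mult)
        also have "\<dots> \<le> cmod (of_real t * poly (pc a) (Complex x0 y) + poly (pc b) (Complex x0 y)) + cmod (poly (pc b) (Complex x0 y))"
          by (metis add_diff_cancel norm_triangle_ineq4)
        also have "\<dots> \<le> cmod (poly (pc b) z) + cmod (poly (pc b) (Complex x0 y))"
          using monoF[OF t y, of x0] z(2) zc by simp
        finally show "t * cmod (poly (pc a) (Complex x0 y)) \<le> cmod (poly (pc b) z) + cmod (poly (pc b) (Complex x0 y))" .
      qed
      from pos_small[OF this] show "poly (pc a) (Complex x0 y) = 0" by simp
    qed
    from infinite_segment_zero[OF _ this] z(1) have "pc a = 0" by (simp add: y0_def)
    with a0 show False by (simp add: pc_eq_0_iff)
  qed
  have B: "\<forall>z. Im z \<noteq> 0 \<longrightarrow> poly (pc b) z \<noteq> 0" if b0: "b \<noteq> 0"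
  proof (intro allI impI notI)
    fix z assume z: "Im z \<noteq> 0" "poly (pc b) z = 0"
    define x0 y0 where "x0 = Re z" and "y0 = Im z"
    have zc: "z = Complex x0 y0" by (simp add: x0_def y0_def)
    have "\<forall>y\<in>{0..\<bar>y0\<bar>}. poly (pc b) (Complex x0 y) = 0"
    proof
      fix y assume y: "y \<in> {0..\<bar>y0\<bar>}"
      have "\<forall>t>0. cmod (poly (pc b) (Complex x0 y)) \<le> t * (cmod (poly (pc a) z) + cmod (poly (pc a) (Complex x0 y)))"
      proof (intro allI impI)
        fix t :: real assume t: "t > 0"
        have "cmod (poly (pc b) (Complex x0 y)) \<le> cmod (of_real t * poly (pc a) (Complex x0 y) + poly (pc b) (Complex x0 y)) + cmod (of_real t * poly (pc a) (Complex x0 y))"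
          by (metis add_diff_cancel_left' norm_triangle_ineq4)
        also have "\<dots> \<le> cmod (of_real t * poly (pc a) z) + cmod (of_real t * poly (pc a) (Complex x0 y))"
          using monoF[OF t y, of x0] z(2) zc by simp
        also have "\<dots> = t * (cmod (poly (pc a) z) + cmod (poly (pc a) (Complex x0 y)))"
          using t by (simp add: norm_mult algebra_simps)
        finally show "cmod (poly (pc b) (Complex x0 y)) \<le> t * (cmod (poly (pc a) z) + cmod (poly (pc a) (Complex x0 y)))" .
      qed
      from pos_small2[OF this] show "poly (pc b) (Complex x0 y) = 0" by simp
    qed
    from infinite_segment_zero[OF _ this] z(1) have "pc b = 0" by (simp add: y0_def)
    with b0 show False by (simp add: pc_eq_0_iff)
  qed
  have "good a" unfolding good_def standard_def nonpos_zeros_def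
    using nonneg_lead[OF na a0] nzr[OF na a0 A] by auto
  moreover have "good b"
  proof (cases "b = 0")
    case True then show ?thesis by (simp add: good_def standard_def nonpos_zeros_def)
  next
    case False
    then show ?thesis unfolding good_def standard_def nonpos_zeros_def
      using nonneg_lead[OF nb False] nzr[OF nb False B[OF False]] by auto
  qed
  ultimately show ?thesis ..
qed

definition A :: "complex \<Rightarrow> real" where "A w = pi/2 + Arg (- \<i> * w)"

lemma A_rep: "rcis (cmod w) (A w) = w"
proof -
  have "rcis (cmod w) (A w) = rcis 1 (pi/2) * rcis (cmod (- \<i> * w)) (Arg (- \<i> * w))"
    by (simp add: A_def rcis_mult norm_mult)
  also have "\<dots> = \<i> * (- \<i> * w)" by (simp only: rcis_cmod_Arg) (simp add: rcis_def)
  finally show ?thesis by simp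
qed

lemma A_upper: assumes "Im w > 0" shows "A w = pi/2 - arctan (Re w / Im w)"
proof -
  have "Re (- \<i> * w) > 0" using assms by simp
  then have "Arg (- \<i> * w) = arctan (Im (- \<i> * w) / Re (- \<i> * w))" by (rule arg_conv_arctan)
  also have "\<dots> = - arctan (Re w / Im w)" by (simp add: arctan_minus)
  finally show ?thesis by (simp add: A_def)
qed

lemma A_upper_bounds: assumes "Im w > 0" shows "0 < A w \<and> A w < pi"
  using A_upper[OF assms] arctan_lbound[of "Re w / Im w"] arctan_ubound[of "Re w / Im w"] by simp

lemma A_mono: assumes "Im w > 0" "d \<ge> 0" shows "A (w + of_real d) \<le> A w"
proof -
  have "Re w / Im w \<le> (Re w + d) / Im w" using assms by (simp add: divide_right_mono)
  then have "arctan (Re w / Im w) \<le> arctan ((Re w + d) / Im w)" by (simp add: arctan_le_iff)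
  then show ?thesis using assms A_upper[of w] A_upper[of "w + of_real d"] by simp
qed

lemma A_pos_real: "x > 0 \<Longrightarrow> A (of_real x) = 0"
proof -
  assume x: "x > 0"
  have "Arg (- \<i> * of_real x) = - pi/2"
    apply (rule Arg_unique'[of x])
    using x pi_gt_zero apply (auto simp: rcis_def cis_def complex_eq_iff)
    using pi_gt_zero by linarith
  then show ?thesis by (simp add: A_def)
qed

lemma A_neg_real: "x < 0 \<Longrightarrow> A (of_real x) = pi"
proof -
  assume x: "x < 0"
  have "Arg (- \<i> * of_real x) = pi/2"
    by (rule Arg_unique'[of "-x"]) (use x in \<open>auto simp: rcis_def cis_def complex_eq_iff\<close>)
  then show ?thesis by (simp add: A_def)
qed

lemma A_cont: assumes "Im w > 0 \<or> Re w \<noteq> 0" shows "isCont A w"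
proof -
  have "- \<i> * w \<notin> \<real>\<^sub>\<le>\<^sub>0" using assms by (auto simp: complex_nonpos_Reals_iff)
  then have "isCont Arg (- \<i> * w)" by (rule continuous_at_Arg)
  then have "isCont (\<lambda>w. Arg (- \<i> * w)) w" by (rule isCont_o2[rotated]) (intro continuous_intros)
  then show ?thesis unfolding A_def[abs_def] by (intro continuous_intros)
qed

lemma prod_rcis:
  "(\<Prod>\<rho>\<leftarrow>S. f \<rho>) = rcis (\<Prod>\<rho>\<leftarrow>S. cmod (f \<rho>)) (\<Sum>\<rho>\<leftarrow>S. A (f \<rho>))"
proof (induction S)
  case Nil then show ?case by simp
next
  case (Cons a S)
  have "(\<Prod>\<rho>\<leftarrow>a # S. f \<rho>) = rcis (cmod (f a)) (A (f a)) * (\<Prod>\<rho>\<leftarrow>S. f \<rho>)" by (simp add: A_rep)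
  also have "\<dots> = rcis (\<Prod>\<rho>\<leftarrow>a # S. cmod (f \<rho>)) (\<Sum>\<rho>\<leftarrow>a # S. A (f \<rho>))"
    using Cons by (simp add: rcis_mult)
  finally show ?case .
qed

definition cnt :: "real list \<Rightarrow> real \<Rightarrow> nat" where "cnt S x = length (filter (\<lambda>\<rho>. x < \<rho>) S)"

lemma cnt_remove1: "a \<in> set xs \<Longrightarrow> cnt xs x = cnt (remove1 a xs) x + (if x < a then 1 else 0)"
  unfolding cnt_def by (induction xs) auto

lemma cnt_zero: "\<forall>\<rho>\<in>set xs. \<rho> \<le> x \<Longrightarrow> cnt xs x = 0"
  unfolding cnt_def by (induction xs) auto

lemma cnt_len: "\<forall>\<rho>\<in>set xs. x < \<rho> \<Longrightarrow> cnt xs x = length xs"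
  unfolding cnt_def by (induction xs) auto

lemma cnt_pos: "\<rho> \<in> set xs \<Longrightarrow> x < \<rho> \<Longrightarrow> cnt xs x \<ge> 1"
  unfolding cnt_def by (induction xs) auto

lemma avoid_finite: fixes F :: "real set" assumes "finite F" "a < b" shows "\<exists>x. a < x \<and> x < b \<and> x \<notin> F"
proof -
  have "infinite {a<..<b}" using assms(2) by simp
  then have "\<not> {a<..<b} \<subseteq> F" using assms(1) finite_subset by blast
  then show ?thesis by auto
qed

lemma tele:
  fixes g :: "real \<Rightarrow> real" and F :: "real set"
  assumes mono: "\<And>u v. u \<le> v \<Longrightarrow> g u \<le> g v" and pos: "\<And>u. g u \<ge> 0"
    and fin: "finite F" and sub: "set S \<union> set R \<subseteq> F"
    and cn: "\<And>x. x \<notin> F \<Longrightarrow> cnt R x \<le> cnt S x \<and> cnt S x \<le> cnt R x + 1"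
  shows "0 \<le> sum_list (map g S) - sum_list (map g R) \<and>
         (\<forall>u. (\<forall>s\<in>set S. s \<le> u) \<longrightarrow> sum_list (map g S) - sum_list (map g R) \<le> g u)"
  using sub cn
proof (induction "length S + length R" arbitrary: S R rule: less_induct)
  case less
  note cnS = less.prems(2)
  show ?case
  proof (cases "S = []")
    case True
    have "R = []"
    proof (rule ccontr)
      assume "R \<noteq> []"
      then obtain \<rho> where \<rho>: "\<rho> \<in> set R" by (cases R) auto
      obtain x where x: "\<rho> - 1 < x" "x < \<rho>" "x \<notin> F" using avoid_finite[OF fin, of "\<rho> - 1" \<rho>] by auto
      have "cnt R x \<ge> 1" using cnt_pos[OF \<rho> x(2)] .
      moreover have "cnt S x = 0" using True by (simp add: cnt_def)
      ultimately show False using cnS[OF x(3)] by simp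
    qed
    with True show ?thesis using pos by simp
  next
    case Snn: False
    define s1 where "s1 = Max (set S)"
    have s1S: "s1 \<in> set S" using Snn by (simp add: s1_def)
    have s1max: "\<forall>s\<in>set S. s \<le> s1" by (simp add: s1_def)
    show ?thesis
    proof (cases "R = []")
      case True
      have "length S \<le> 1"
      proof -
        define m where "m = Min (set S)"
        have "\<forall>s\<in>set S. m \<le> s" by (simp add: m_def)
        obtain x where x: "m - 1 < x" "x < m" "x \<notin> F" using avoid_finite[OF fin, of "m - 1" m] by auto
        have "cnt S x = length S" using x(2) \<open>\<forall>s\<in>set S. m \<le> s\<close> by (intro cnt_len) auto
        then show ?thesis using cnS[OF x(3)] True by (simp add: cnt_def)
      qed
      then have "S = [s1]" using Snn s1S by (cases S) auto
      then show ?thesis using True pos mono by auto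
    next
      case Rnn: False
      define r1 where "r1 = Max (set R)"
      have r1R: "r1 \<in> set R" using Rnn by (simp add: r1_def)
      have r1max: "\<forall>r\<in>set R. r \<le> r1" by (simp add: r1_def)
      have rs: "r1 \<le> s1"
      proof (rule ccontr)
        assume "\<not> r1 \<le> s1"
        then obtain x where x: "s1 < x" "x < r1" "x \<notin> F" using avoid_finite[OF fin, of s1 r1] by auto
        have "cnt R x \<ge> 1" using cnt_pos[OF r1R x(2)] .
        moreover have "cnt S x = 0" using s1max x(1) by (intro cnt_zero) auto
        ultimately show False using cnS[OF x(3)] by simp
      qed
      define S' where "S' = remove1 s1 S"
      define R' where "R' = remove1 r1 R"
      have S'bound: "\<forall>s\<in>set S'. s \<le> r1"
      proof (rule ccontr)
        assume "\<not> (\<forall>s\<in>set S'. s \<le> r1)"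
        then obtain s where s: "s \<in> set S'" "r1 < s" by auto
        obtain x where x: "r1 < x" "x < s" "x \<notin> F" using avoid_finite[OF fin, of r1 s] s(2) by auto
        have "s \<le> s1" using s(1) s1max by (auto simp: S'_def dest: set_remove1_subset[THEN subsetD])
        have "cnt S x = cnt S' x + 1" using cnt_remove1[OF s1S, of x] x \<open>s \<le> s1\<close> by (simp add: S'_def)
        moreover have "cnt S' x \<ge> 1" using cnt_pos[OF s(1) x(2)] .
        moreover have "cnt R x = 0" using r1max x(1) by (intro cnt_zero) auto
        ultimately show False using cnS[OF x(3)] by simp
      qed
      have sub': "set S' \<union> set R' \<subseteq> F"
        using less.prems(1) by (auto simp: S'_def R'_def dest: set_remove1_subset[THEN subsetD])
      have cn': "cnt R' x \<le> cnt S' x \<and> cnt S' x \<le> cnt R' x + 1" if x: "x \<notin> F" for x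
      proof -
        have eS: "cnt S x = cnt S' x + (if x < s1 then 1 else 0)" using cnt_remove1[OF s1S] by (simp add: S'_def)
        have eR: "cnt R x = cnt R' x + (if x < r1 then 1 else 0)" using cnt_remove1[OF r1R] by (simp add: R'_def)
        show ?thesis
        proof (cases "x < r1")
          case True
          then show ?thesis using eS eR rs cnS[OF x] by auto
        next
          case False
          then have "cnt R x = 0" using r1max by (intro cnt_zero) auto
          then show ?thesis using eS eR cnS[OF x] False by (auto split: if_splits)
        qed
      qed
      have lt: "length S' + length R' < length S + length R"
      proof -
        have "length S > 0" "length R > 0" using s1S r1R by (auto simp: length_pos_if_in_set)
        moreover have "length S' = length S - 1" "length R' = length R - 1"
          using s1S r1R by (simp_all add: S'_def R'_def length_remove1)
        ultimately show ?thesis by arith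
      qed
      from less.hyps[OF lt sub' cn'] S'bound
      have IH: "0 \<le> sum_list (map g S') - sum_list (map g R')" "sum_list (map g S') - sum_list (map g R') \<le> g r1"
        by auto
      have eq: "sum_list (map g S) - sum_list (map g R) = g s1 - g r1 + (sum_list (map g S') - sum_list (map g R'))"
        using sum_list_map_remove1[OF s1S, of g] sum_list_map_remove1[OF r1R, of g]
        by (simp add: S'_def R'_def)
      have "g r1 \<le> g s1" using mono rs by simp
      show ?thesis
      proof (intro conjI allI impI)
        show "0 \<le> sum_list (map g S) - sum_list (map g R)" using eq IH \<open>g r1 \<le> g s1\<close> by linarith
        fix u assume "\<forall>s\<in>set S. s \<le> u"
        then have "s1 \<le> u" using s1S by auto
        then have "g s1 \<le> g u" by (rule mono)
        then show "sum_list (map g S) - sum_list (map g R) \<le> g u" using eq IH by linarith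
      qed
    qed
  qed
qed

definition Lf :: "real list \<Rightarrow> real list \<Rightarrow> complex \<Rightarrow> real" where
  "Lf S R z = (\<Sum>\<rho>\<leftarrow>S. A (z - of_real \<rho>)) - (\<Sum>\<rho>\<leftarrow>R. A (z - of_real \<rho>))"

lemma prod_list_pos_real: "(\<forall>x\<in>set xs. f x > 0) \<Longrightarrow> (\<Prod>x\<leftarrow>xs. f x) > (0::real)"
  by (induction xs) auto

lemma sum_list_le_len: "(\<forall>x\<in>set xs. f x \<le> c) \<Longrightarrow> (\<Sum>x\<leftarrow>xs. f x) \<le> real (length xs) * c"
  by (induction xs) (auto simp: algebra_simps)

lemma sum_list_nonneg_real: "(\<forall>x\<in>set xs. f x \<ge> 0) \<Longrightarrow> (\<Sum>x\<leftarrow>xs. f x) \<ge> (0::real)"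
  by (induction xs) auto

lemma ofreal_rcis: "complex_of_real c * rcis r t = rcis (c * r) t"
  by (simp add: rcis_def)

lemma poly_rcis:
  assumes "Im z > 0"
  shows "poly (pc (smult C (\<Prod>\<rho>\<leftarrow>S. lin \<rho>))) z = rcis (C * (\<Prod>\<rho>\<leftarrow>S. cmod (z - of_real \<rho>))) (\<Sum>\<rho>\<leftarrow>S. A (z - of_real \<rho>))
     \<and> (\<Prod>\<rho>\<leftarrow>S. cmod (z - of_real \<rho>)) > 0"
proof
  show "poly (pc (smult C (\<Prod>\<rho>\<leftarrow>S. lin \<rho>))) z = rcis (C * (\<Prod>\<rho>\<leftarrow>S. cmod (z - of_real \<rho>))) (\<Sum>\<rho>\<leftarrow>S. A (z - of_real \<rho>))"
    by (simp only: poly_pc_prod prod_rcis[of "\<lambda>\<rho>. z - of_real \<rho>"] ofreal_rcis)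
  have "\<forall>\<rho>\<in>set S. cmod (z - of_real \<rho>) > 0" using assms by (auto simp: complex_eq_iff)
  then show "(\<Prod>\<rho>\<leftarrow>S. cmod (z - of_real \<rho>)) > 0" by (rule prod_list_pos_real)
qed

lemma quot_rep:
  assumes "Ca > 0" "Cb > 0" "Im z > 0"
  shows "\<exists>Rr>0. poly (pc (smult Cb (\<Prod>\<rho>\<leftarrow>S. lin \<rho>))) z / poly (pc (smult Ca (\<Prod>\<rho>\<leftarrow>R. lin \<rho>))) z = rcis Rr (Lf S R z)"
proof -
  let ?Pb = "\<Prod>\<rho>\<leftarrow>S. cmod (z - of_real \<rho>)" and ?Pa = "\<Prod>\<rho>\<leftarrow>R. cmod (z - of_real \<rho>)"
  from poly_rcis[OF assms(3), of Cb S] poly_rcis[OF assms(3), of Ca R]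
  have "poly (pc (smult Cb (\<Prod>\<rho>\<leftarrow>S. lin \<rho>))) z / poly (pc (smult Ca (\<Prod>\<rho>\<leftarrow>R. lin \<rho>))) z
      = rcis (Cb * ?Pb / (Ca * ?Pa)) (Lf S R z)" and "?Pa > 0" "?Pb > 0"
    by (simp_all add: rcis_divide Lf_def)
  moreover have "Cb * ?Pb / (Ca * ?Pa) > 0" using calculation(2,3) assms(1,2) by simp
  ultimately show ?thesis by blast
qed

lemma A_eq_Arg: "Im w > 0 \<Longrightarrow> A w = Arg w"
proof -
  assume w: "Im w > 0"
  then have "w \<noteq> 0" by auto
  have "Arg w = A w"
    by (rule Arg_unique'[of "cmod w"]) (use w \<open>w \<noteq> 0\<close> A_upper_bounds[OF w] A_rep[of w] in auto)
  then show ?thesis by simp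
qed

lemma cnj_rep: "cnj z = rcis (cmod z) (- A z)"
proof -
  have "cnj z = cnj (rcis (cmod z) (A z))" by (simp add: A_rep)
  also have "\<dots> = rcis (cmod z) (- A z)" by (simp add: rcis_def cis_cnj)
  finally show ?thesis .
qed

lemma poly_x_mult: "poly (pc ([:0,1:] * a)) z = z * poly (pc a) z"
  by (simp only: poly_pc_mult) (simp add: map_poly_pCons)

lemma poly_pCons0: "poly (pc (pCons 0 a)) z = z * poly (pc a) z"
  by (simp add: map_poly_pCons)

lemma nonneg_x: "nonneg [:0, 1:]"
  using nonneg_lin[of 0] by simp

lemma ptwise:
  assumes K: "K a b" and a0: "a \<noteq> 0"
    and fa: "a = smult Ca (\<Prod>\<rho>\<leftarrow>R. lin \<rho>)" and fb: "b = smult Cb (\<Prod>\<rho>\<leftarrow>S. lin \<rho>)"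
    and C: "Ca > 0" "Cb > 0" and z: "Im z > 0"
  shows "Lf S R z \<noteq> pi \<and> Lf S R z \<noteq> A z - pi"
proof -
  from K_nonneg[OF K] have na: "nonneg a" and nb: "nonneg b" by auto
  from quot_rep[OF C(1,2) z, of S R] obtain Rr where Rr: "Rr > 0"
    "poly (pc b) z / poly (pc a) z = rcis Rr (Lf S R z)" using fa fb by blast
  have az: "poly (pc a) z \<noteq> 0"
  proof -
    have "good a" using K_good[OF K a0] by simp
    then show ?thesis using a0 z unfolding good_def nonpos_zeros_def by auto
  qed
  have bz: "poly (pc b) z = rcis Rr (Lf S R z) * poly (pc a) z" using Rr(2) az by (simp add: field_simps)
  have goodIm: "Im w = 0" if "good p" "p \<noteq> 0" "poly (pc p) w = 0" for p w
    using that unfolding good_def nonpos_zeros_def by auto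
  show ?thesis
  proof
    show "Lf S R z \<noteq> pi"
    proof
      assume L: "Lf S R z = pi"
      have g: "good (smult Rr a + smult 1 b)" using K Rr(1) zero_less_one unfolding K_def by blast
      have nz: "smult Rr a + smult 1 b \<noteq> 0" by (rule nonneg_comb_nz[OF na nb a0 Rr(1)]) simp
      have "poly (pc (smult Rr a + smult 1 b)) z = of_real Rr * poly (pc a) z + poly (pc b) z"
        by (simp add: poly_pc_add poly_pc_smult)
      also have "\<dots> = 0" using bz L by (simp add: rcis_def)
      finally have "Im z = 0" using goodIm[OF g nz] by simp
      with z show False by simp
    qed
    show "Lf S R z \<noteq> A z - pi"
    proof
      assume L: "Lf S R z = A z - pi"
      have zn: "cmod z > 0" using z by auto
      define t where "t = cmod z / Rr"
      have t: "t > 0" using zn Rr(1) by (simp add: t_def)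
      have g: "good (smult t b + smult 1 ([:0,1:] * a))" using K t zero_less_one unfolding K_def by blast
      have nxa: "nonneg ([:0,1:] * a)" by (rule nonneg_mult[OF nonneg_x na])
      have xa0: "[:0,1:] * a \<noteq> 0" using a0 by simp
      have nz: "smult t b + smult 1 ([:0,1:] * a) \<noteq> 0"
        using nonneg_comb_nz[OF nxa nb xa0 zero_less_one, of t] t by (simp add: add.commute)
      have rc: "rcis Rr (A z - pi) = - (of_real (Rr / cmod z) * z)"
      proof -
        have "rcis Rr (A z - pi) = - rcis Rr (A z)" by (simp add: rcis_def cis_def complex_eq_iff)
        also have "rcis Rr (A z) = of_real (Rr / cmod z) * rcis (cmod z) (A z)"
          using zn by (simp only: ofreal_rcis) simp
        finally show ?thesis by (simp add: A_rep)
      qed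
      have "poly (pc (smult t b + smult 1 ([:0,1:] * a))) z = of_real t * poly (pc b) z + z * poly (pc a) z"
        by (simp add: poly_pc_add poly_pc_smult poly_pCons0)
      also have "\<dots> = 0" using bz L rc zn Rr(1) by (simp add: t_def field_simps)
      finally have "Im z = 0" using goodIm[OF g nz] by simp
      with z show False by simp
    qed
  qed
qed

lemma sum_list_isCont:
  fixes f :: "real \<Rightarrow> complex \<Rightarrow> real"
  shows "(\<forall>\<rho>\<in>set S. isCont (f \<rho>) z) \<Longrightarrow> isCont (\<lambda>z. \<Sum>\<rho>\<leftarrow>S. f \<rho> z) z"
  by (induction S) (auto intro!: isCont_add)

lemma Lf_cont:
  assumes "\<forall>\<rho>\<in>set S \<union> set R. Im z > 0 \<or> Re z \<noteq> \<rho>"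
  shows "isCont (Lf S R) z"
proof -
  have c: "isCont (\<lambda>z. A (z - of_real \<rho>)) z" if "\<rho> \<in> set S \<union> set R" for \<rho>
  proof -
    have "isCont A (z - of_real \<rho>)" using assms that by (intro A_cont) auto
    then show ?thesis by (rule isCont_o2[rotated]) (intro continuous_intros)
  qed
  have "isCont (\<lambda>z. (\<Sum>\<rho>\<leftarrow>S. A (z - of_real \<rho>)) - (\<Sum>\<rho>\<leftarrow>R. A (z - of_real \<rho>))) z"
    using c by (intro continuous_intros sum_list_isCont) auto
  then show ?thesis unfolding Lf_def[abs_def] .
qed

lemma A_cis: assumes "0 < d" "d < pi" shows "A (cis d) = d \<and> Im (cis d) > 0"
proof
  show im: "Im (cis d) > 0" using assms by (simp add: sin_gt_zero)
  have "Arg (cis d) = d" by (rule Arg_unique'[of 1]) (use assms in \<open>auto simp: rcis_def\<close>)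
  then show "A (cis d) = d" using A_eq_Arg[OF im] by simp
qed

lemma big_sector:
  assumes pt: "\<forall>z. Im z > 0 \<longrightarrow> Lf S R z \<noteq> pi \<and> Lf S R z \<noteq> A z - pi"
    and roots: "\<forall>\<rho>\<in>set S \<union> set R. \<rho> \<le> 0" and z: "Im z > 0"
  shows "A z - pi < Lf S R z \<and> Lf S R z < pi"
proof -
  define n where "n = length S + length R + 2"
  define d where "d = pi / n"
  have n: "real n \<ge> 2" by (simp add: n_def)
  have d0: "d > 0" using n by (simp add: d_def)
  have dn: "d * n = pi" using n by (simp add: d_def)
  have dpi: "d < pi"
  proof -
    have "pi * 1 < pi * real n" using n by (intro mult_strict_left_mono) auto
    then show ?thesis using n by (simp add: d_def divide_less_eq)
  qed
  define z1 where "z1 = cis d"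
  from A_cis[OF d0 dpi] have Az1: "A z1 = d" and z1: "Im z1 > 0" by (auto simp: z1_def)
  have gb: "0 < A (z1 - of_real \<rho>) \<and> A (z1 - of_real \<rho>) \<le> d" if "\<rho> \<le> 0" for \<rho>
  proof -
    have "A (z1 + of_real (- \<rho>)) \<le> A z1" using A_mono[OF z1, of "-\<rho>"] that by simp
    moreover have "Im (z1 - of_real \<rho>) > 0" using z1 by simp
    ultimately show ?thesis using Az1 A_upper_bounds[of "z1 - of_real \<rho>"] by simp
  qed
  have sS: "(\<Sum>\<rho>\<leftarrow>S. A (z1 - of_real \<rho>)) \<le> real (length S) * d"
    using gb roots by (intro sum_list_le_len) auto
  have sS0: "(\<Sum>\<rho>\<leftarrow>S. A (z1 - of_real \<rho>)) \<ge> 0"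
    using gb roots by (intro sum_list_nonneg_real) (auto intro: less_imp_le)
  have sR: "(\<Sum>\<rho>\<leftarrow>R. A (z1 - of_real \<rho>)) \<le> real (length R) * d"
    using gb roots by (intro sum_list_le_len) auto
  have "real (length S) * d < real n * d" using d0 by (simp add: n_def)
  then have b1: "Lf S R z1 < pi"
    using sS sR dn gb roots sum_list_nonneg_real[of R "\<lambda>\<rho>. A (z1 - of_real \<rho>)"]
    unfolding Lf_def by (smt (verit) UnCI less_imp_le mult.commute)
  have "(real (length R) + 1) * d < real n * d" using d0 by (simp add: n_def)
  then have b2: "A z1 - pi < Lf S R z1"
    using sS0 sR dn Az1 unfolding Lf_def by (simp add: algebra_simps)
  define g where "g s = z1 + of_real s * (z - z1)" for s
  have gim: "Im (g s) > 0" if "s \<in> {0..1}" for s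
  proof -
    have "Im (g s) = (1 - s) * Im z1 + s * Im z" by (simp add: g_def algebra_simps)
    moreover have "(1 - s) * Im z1 \<ge> 0" "s * Im z \<ge> 0" using that z1 z by auto
    moreover have "(1 - s) * Im z1 > 0 \<or> s * Im z > 0" using that z1 z by (cases "s = 1") auto
    ultimately show ?thesis by linarith
  qed
  have gc: "isCont g s" for s unfolding g_def by (intro continuous_intros)
  have cL: "continuous_on {0..1} (\<lambda>s. Lf S R (g s))"
    by (rule continuous_at_imp_continuous_on)
       (auto intro!: isCont_o2[OF gc] Lf_cont dest: gim)
  have cA: "continuous_on {0..1} (\<lambda>s. Lf S R (g s) - A (g s) + pi)"
    by (rule continuous_at_imp_continuous_on)
       (auto intro!: continuous_intros isCont_o2[OF gc] Lf_cont A_cont dest: gim)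
  have g0: "g 0 = z1" and g1: "g 1 = z" by (simp_all add: g_def)
  show ?thesis
  proof (rule ccontr)
    assume "\<not> ?thesis"
    then consider "Lf S R z \<ge> pi" | "Lf S R z - A z + pi \<le> 0" by linarith
    then show False
    proof cases
      case 1
      have "\<exists>s\<ge>0. s \<le> 1 \<and> Lf S R (g s) = pi"
        by (rule IVT'[OF _ _ _ cL]) (use b1 1 g0 g1 in auto)
      then obtain s where "s \<in> {0..1}" "Lf S R (g s) = pi" by auto
      then show False using pt gim by blast
    next
      case 2
      have "\<exists>s\<ge>0. s \<le> 1 \<and> Lf S R (g s) - A (g s) + pi = 0"
        by (rule IVT2'[OF _ _ _ cA]) (use b2 2 g0 g1 in auto)
      then obtain s where "s \<in> {0..1}" "Lf S R (g s) = A (g s) - pi" by auto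
      then show False using pt gim by blast
    qed
  qed
qed

lemma sum_A_real:
  "x \<notin> set S \<Longrightarrow> (\<Sum>\<rho>\<leftarrow>S. A (of_real x - of_real \<rho>)) = pi * real (cnt S x)"
proof (induction S)
  case Nil then show ?case by (simp add: cnt_def)
next
  case (Cons a S)
  have "A (of_real x - of_real a) = (if x < a then pi else 0)"
    using Cons.prems A_pos_real[of "x - a"] A_neg_real[of "x - a"] by (auto simp flip: of_real_diff)
  then show ?case using Cons by (auto simp: cnt_def algebra_simps)
qed

lemma boundary:
  assumes big: "\<forall>z. Im z > 0 \<longrightarrow> A z - pi < Lf S R z \<and> Lf S R z < pi"
    and x: "x \<noteq> 0" "x \<notin> set S \<union> set R"
  shows "A (of_real x) - pi \<le> Lf S R (of_real x) \<and> Lf S R (of_real x) \<le> pi"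
proof -
  define f where "f e = Complex x e" for e
  have f: "(f \<longlongrightarrow> of_real x) (at_right 0)"
  proof -
    have "((\<lambda>e. of_real x + \<i> * of_real e) \<longlongrightarrow> of_real x + \<i> * of_real 0) (at_right (0::real))"
      by (intro tendsto_intros)
    moreover have "(\<lambda>e. of_real x + \<i> * of_real e) = f" by (auto simp: f_def complex_eq_iff)
    ultimately show ?thesis by simp
  qed
  have cL: "isCont (Lf S R) (of_real x)" using x by (intro Lf_cont) auto
  have cA: "isCont A (of_real x)" using x by (intro A_cont) auto
  have tL: "((\<lambda>e. Lf S R (f e)) \<longlongrightarrow> Lf S R (of_real x)) (at_right 0)"
    by (rule isCont_tendsto_compose[OF cL f])
  have tA: "((\<lambda>e. Lf S R (f e) - A (f e) + pi) \<longlongrightarrow> Lf S R (of_real x) - A (of_real x) + pi) (at_right 0)"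
    by (intro tendsto_intros tL isCont_tendsto_compose[OF cA f])
  have ev: "eventually (\<lambda>e. Im (f e) > 0) (at_right (0::real))"
    using eventually_at_right_less[of "0::real"] by eventually_elim (simp add: f_def)
  have e1: "eventually (\<lambda>e. Lf S R (f e) \<le> pi) (at_right (0::real))"
    using ev by eventually_elim (use big in \<open>auto intro: less_imp_le\<close>)
  have e2: "eventually (\<lambda>e. 0 \<le> Lf S R (f e) - A (f e) + pi) (at_right (0::real))"
    using ev by eventually_elim (use big in \<open>force\<close>)
  have "Lf S R (of_real x) \<le> pi" by (rule tendsto_upperbound[OF tL e1]) simp
  moreover have "0 \<le> Lf S R (of_real x) - A (of_real x) + pi" by (rule tendsto_lowerbound[OF tA e2]) simp
  ultimately show ?thesis by simp
qed

lemma sector: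
  assumes K: "K a b" and a0: "a \<noteq> 0" and z: "Im z > 0"
  shows "poly (pc a) z \<noteq> 0 \<and> 0 \<le> Im (poly (pc b) z / poly (pc a) z)
         \<and> Im (poly (pc b) z / poly (pc a) z * cnj z) \<le> 0"
proof -
  from K_good[OF K a0] have ga: "good a" and gb: "good b" by auto
  have az: "poly (pc a) z \<noteq> 0" using ga a0 z unfolding good_def nonpos_zeros_def by auto
  show ?thesis
  proof (cases "b = 0")
    case True then show ?thesis using az by simp
  next
    case b0: False
    from good_factor[OF ga a0] obtain R where Ca: "lead_coeff a > 0"
      and R: "\<forall>\<rho>\<in>set R. \<rho> \<le> 0" "a = smult (lead_coeff a) (\<Prod>\<rho>\<leftarrow>R. lin \<rho>)" by blast
    from good_factor[OF gb b0] obtain S where Cb: "lead_coeff b > 0"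
      and S: "\<forall>\<rho>\<in>set S. \<rho> \<le> 0" "b = smult (lead_coeff b) (\<Prod>\<rho>\<leftarrow>S. lin \<rho>)" by blast
    have pt: "\<forall>w. Im w > 0 \<longrightarrow> Lf S R w \<noteq> pi \<and> Lf S R w \<noteq> A w - pi"
      using ptwise[OF K a0 R(2) S(2) Ca Cb] by blast
    have roots: "\<forall>\<rho>\<in>set S \<union> set R. \<rho> \<le> 0" using R S by auto
    have big: "\<forall>w. Im w > 0 \<longrightarrow> A w - pi < Lf S R w \<and> Lf S R w < pi"
      using big_sector[OF pt roots] by blast
    define F where "F = insert 0 (set S \<union> set R)"
    have finF: "finite F" by (simp add: F_def)
    have subF: "set S \<union> set R \<subseteq> F" by (auto simp: F_def)
    have cn: "cnt R x \<le> cnt S x \<and> cnt S x \<le> cnt R x + 1" if xF: "x \<notin> F" for x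
    proof (cases "x > 0")
      case True
      have "\<forall>\<rho>\<in>set S. \<rho> \<le> x" "\<forall>\<rho>\<in>set R. \<rho> \<le> x" using roots True by force+
      then have "cnt S x = 0" "cnt R x = 0" by (simp_all add: cnt_zero)
      then show ?thesis by simp
    next
      case False
      then have xn: "x < 0" using xF by (auto simp: F_def)
      have xs: "x \<notin> set S" "x \<notin> set R" "x \<noteq> 0" using xF by (auto simp: F_def)
      from boundary[OF big xs(3)] xs(1,2)
      have b1: "A (of_real x) - pi \<le> Lf S R (of_real x)" and b2: "Lf S R (of_real x) \<le> pi" by auto
      have Ax: "A (of_real x) = pi" using A_neg_real xn .
      have Lx: "Lf S R (of_real x) = pi * (real (cnt S x) - real (cnt R x))"
        using sum_A_real[OF xs(1)] sum_A_real[OF xs(2)] by (simp add: Lf_def algebra_simps)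
      have "0 \<le> pi * (real (cnt S x) - real (cnt R x))" using b1 Ax Lx by simp
      then have h1: "real (cnt R x) \<le> real (cnt S x)" using pi_gt_zero by (simp add: zero_le_mult_iff)
      have "pi * (real (cnt S x) - real (cnt R x)) \<le> pi * 1" using b2 Lx by simp
      then have "real (cnt S x) - real (cnt R x) \<le> 1" using pi_gt_zero by (simp only: mult_le_cancel_left)
      then have h2: "real (cnt S x) \<le> real (cnt R x + 1)" by simp
      from h1 h2 show ?thesis by (simp only: of_nat_le_iff)
    qed
    define g where "g \<rho> = A (z - of_real \<rho>)" for \<rho>
    have gm: "g u \<le> g v" if "u \<le> v" for u v
    proof -
      have "A ((z - of_real v) + of_real (v - u)) \<le> A (z - of_real v)"
        using z that by (intro A_mono) auto
      then show ?thesis by (simp add: g_def algebra_simps)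
    qed
    have gp: "g u \<ge> 0" for u using A_upper_bounds[of "z - of_real u"] z by (simp add: g_def)
    have Lg: "Lf S R z = sum_list (map g S) - sum_list (map g R)" unfolding Lf_def g_def[abs_def] by simp
    have T: "0 \<le> sum_list (map g S) - sum_list (map g R) \<and>
         (\<forall>u. (\<forall>s\<in>set S. s \<le> u) \<longrightarrow> sum_list (map g S) - sum_list (map g R) \<le> g u)"
      by (rule tele[where g=g and F=F and S=S and R=R]) (use gm gp finF subF cn in auto)
    have "g 0 = A z" by (simp add: g_def)
    with T S(1) have L: "0 \<le> Lf S R z" "Lf S R z \<le> A z" unfolding Lg by auto
    have Az: "A z < pi" using A_upper_bounds[OF z] by simp
    from quot_rep[OF Ca Cb z, of S R] R(2) S(2) obtain Rr where Rr: "Rr > 0"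
      "poly (pc b) z / poly (pc a) z = rcis Rr (Lf S R z)" by metis
    have i1: "0 \<le> Im (poly (pc b) z / poly (pc a) z)"
      using Rr L Az by (simp add: sin_ge_zero)
    have "poly (pc b) z / poly (pc a) z * cnj z = rcis (Rr * cmod z) (Lf S R z - A z)"
      by (simp only: Rr(2) cnj_rep rcis_mult) simp
    moreover have "sin (Lf S R z - A z) \<le> 0"
    proof -
      have "sin (A z - Lf S R z) \<ge> 0" using L Az by (intro sin_ge_zero) auto
      then show ?thesis by (metis minus_diff_eq sin_minus neg_0_le_iff_le)
    qed
    ultimately have i2: "Im (poly (pc b) z / poly (pc a) z * cnj z) \<le> 0"
      using Rr(1) by (simp add: mult_nonneg_nonpos)
    from az i1 i2 show ?thesis by blast
  qed
qed

lemma good_from: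
  assumes "nonneg p" "p \<noteq> 0" "\<forall>w. Im w > 0 \<longrightarrow> poly (pc p) w \<noteq> 0"
  shows "good p"
proof -
  have "Im w = 0 \<and> Re w \<le> 0" if w: "poly (pc p) w = 0" for w
  proof -
    have "\<not> Im w > 0" using assms(3) w by blast
    moreover have "\<not> Im w < 0"
    proof
      assume "Im w < 0"
      then have "Im (cnj w) > 0" by simp
      moreover have "poly (pc p) (cnj w) = 0" using w by (simp add: poly_pc_cnj)
      ultimately show False using assms(3) by blast
    qed
    ultimately have im: "Im w = 0" by simp
    then have wr: "w = of_real (Re w)" by (simp add: complex_eq_iff)
    have "Re w \<le> 0"
    proof (rule ccontr)
      assume "\<not> Re w \<le> 0"
      then have "poly p (Re w) > 0" using nonneg_poly_pos assms by simp
      moreover have "poly p (Re w) = 0" using w wr poly_pc_of_real by (metis of_real_eq_0_iff)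
      ultimately show False by simp
    qed
    with im show ?thesis by simp
  qed
  then show ?thesis using nonneg_lead[OF assms(1,2)]
    unfolding good_def standard_def nonpos_zeros_def by auto
qed

lemma core:
  assumes Kb: "K a b" and Kc: "K a c" and a0: "a \<noteq> 0"
  shows "K a (b + c)"
  unfolding K_def
proof (intro allI impI conjI)
  fix l r :: real assume l: "l > 0" and r: "r > 0"
  from K_nonneg[OF Kb] K_nonneg[OF Kc] have na: "nonneg a" and nb: "nonneg b" and nc: "nonneg c" by auto
  have nbc: "nonneg (b + c)" using nb nc by (rule nonneg_add)
  have nxa: "nonneg ([:0,1:] * a)" by (rule nonneg_mult[OF nonneg_x na])
  have xa0: "[:0,1:] * a \<noteq> 0" using a0 by simp
  have sec: "poly (pc a) w \<noteq> 0 \<and> 0 \<le> Im (poly (pc b) w / poly (pc a) w + poly (pc c) w / poly (pc a) w)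
     \<and> Im ((poly (pc b) w / poly (pc a) w + poly (pc c) w / poly (pc a) w) * cnj w) \<le> 0" if w: "Im w > 0" for w
    using sector[OF Kb a0 w] sector[OF Kc a0 w] by (simp add: distrib_right)
  show "good (smult l a + smult r (b + c))"
  proof (rule good_from)
    show "nonneg (smult l a + smult r (b + c))"
      using nonneg_add[OF nonneg_smult[OF _ na] nonneg_smult[OF _ nbc]] l r by simp
    show "smult l a + smult r (b + c) \<noteq> 0" using nonneg_comb_nz[OF na nbc a0 l] r by simp
    show "\<forall>w. Im w > 0 \<longrightarrow> poly (pc (smult l a + smult r (b + c))) w \<noteq> 0"
    proof (intro allI impI notI)
      fix w assume w: "Im w > 0" and e: "poly (pc (smult l a + smult r (b + c))) w = 0"
      define \<alpha> where "\<alpha> = poly (pc a) w"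
      define u where "u = poly (pc b) w / \<alpha> + poly (pc c) w / \<alpha>"
      from sec[OF w] have \<alpha>: "\<alpha> \<noteq> 0" and su: "Im (u * cnj w) \<le> 0" by (auto simp: \<alpha>_def u_def)
      have "poly (pc (smult l a + smult r (b + c))) w = \<alpha> * (of_real l + of_real r * u)"
        using \<alpha> by (simp add: poly_pc_add poly_pc_smult \<alpha>_def u_def field_simps)
      with e \<alpha> have h: "of_real l + of_real r * u = 0" by simp
      have "u = (of_real l + of_real r * u - of_real l) / of_real r" using r by simp
      also have "\<dots> = - of_real l / of_real r" using h by simp
      finally have "Im (u * cnj w) = (l / r) * Im w" by simp
      moreover have "(l / r) * Im w > 0" using l r w by simp
      ultimately show False using su by simp
    qed
  qed
  show "good (smult l (b + c) + smult r ([:0,1:] * a))"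
  proof (rule good_from)
    show "nonneg (smult l (b + c) + smult r ([:0,1:] * a))"
      using nonneg_add[OF nonneg_smult[OF _ nbc] nonneg_smult[OF _ nxa]] l r by simp
    show "smult l (b + c) + smult r ([:0,1:] * a) \<noteq> 0"
      using nonneg_comb_nz[OF nxa nbc xa0 r, of l] l by (simp add: add.commute)
    show "\<forall>w. Im w > 0 \<longrightarrow> poly (pc (smult l (b + c) + smult r ([:0,1:] * a))) w \<noteq> 0"
    proof (intro allI impI notI)
      fix w assume w: "Im w > 0" and e: "poly (pc (smult l (b + c) + smult r ([:0,1:] * a))) w = 0"
      define \<alpha> where "\<alpha> = poly (pc a) w"
      define u where "u = poly (pc b) w / \<alpha> + poly (pc c) w / \<alpha>"
      from sec[OF w] have \<alpha>: "\<alpha> \<noteq> 0" and su: "0 \<le> Im u" by (auto simp: \<alpha>_def u_def)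
      have "poly (pc (smult l (b + c) + smult r ([:0,1:] * a))) w = \<alpha> * (of_real l * u + of_real r * w)"
        using \<alpha> by (simp add: poly_pc_add poly_pc_smult poly_pCons0 \<alpha>_def u_def field_simps)
      with e \<alpha> have h: "of_real l * u + of_real r * w = 0" by simp
      have "u = (of_real l * u + of_real r * w - of_real r * w) / of_real l" using l by simp
      also have "\<dots> = - (of_real r * w) / of_real l" using h by simp
      finally have "Im u = - (r / l) * Im w" by simp
      moreover have "(r / l) * Im w > 0" using l r w by simp
      ultimately show False using su by simp
    qed
  qed
qed

definition face :: "bool \<Rightarrow> cube \<Rightarrow> cube" where "face v C = (\<lambda>\<beta>. C (v # \<beta>))"

lemma smult_as_mult: "smult a p = [:a:] * p" by simp

lemma interp_lin:
  "interp n l r (\<lambda>\<alpha>. p * X \<alpha> + q * Y \<alpha>) = p * interp n l r X + q * interp n l r Y"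
proof (induction n arbitrary: l r X Y)
  case 0 then show ?case by simp
next
  case (Suc n)
  have "interp1 (l 0) (r 0) (\<lambda>\<alpha>. p * X \<alpha> + q * Y \<alpha>) =
        (\<lambda>\<alpha>. p * interp1 (l 0) (r 0) X \<alpha> + q * interp1 (l 0) (r 0) Y \<alpha>)"
    by (simp add: interp1_def fun_eq_iff algebra_simps smult_add_right)
  then show ?case using Suc by simp
qed

lemma interp_mult: "interp n l r (\<lambda>\<alpha>. p * X \<alpha>) = p * interp n l r X"
  using interp_lin[of n l r p X 0 X] by simp

lemma interp_add: "interp n l r (\<lambda>\<alpha>. X \<alpha> + Y \<alpha>) = interp n l r X + interp n l r Y"
  using interp_lin[of n l r 1 X 1 Y] by simp

lemma interp_local:
  "(\<forall>\<alpha>. length \<alpha> = n \<longrightarrow> X \<alpha> = Y \<alpha>) \<Longrightarrow> interp n l r X = interp n l r Y"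
proof (induction n arbitrary: l r X Y)
  case 0 then show ?case by simp
next
  case (Suc n)
  have "\<forall>\<alpha>. length \<alpha> = n \<longrightarrow> interp1 (l 0) (r 0) X \<alpha> = interp1 (l 0) (r 0) Y \<alpha>"
    using Suc.prems by (simp add: interp1_def)
  then show ?case using Suc.IH by simp
qed

lemma interp_Suc_split:
  "interp (Suc n) l r C = smult (l 0) (interp n (\<lambda>i. l (Suc i)) (\<lambda>i. r (Suc i)) (face True C))
     + smult (r 0) (interp n (\<lambda>i. l (Suc i)) (\<lambda>i. r (Suc i)) (face False C))"
proof -
  have "interp1 (l 0) (r 0) C = (\<lambda>\<beta>. [:l 0:] * face True C \<beta> + [:r 0:] * face False C \<beta>)"
    by (simp add: interp1_def face_def)
  then show ?thesis by (simp only: interp.simps interp_lin smult_as_mult)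
qed

lemma face_flip_Suc: "face v (flip (Suc i) C) = flip i (face v C)"
  by (simp add: face_def flip_def fun_eq_iff list_update_code)

lemma nonneg_pCons0: "nonneg p \<Longrightarrow> nonneg (pCons 0 p)"
  by (auto simp: nonneg_def coeff_pCons split: nat.split)

lemma face_flip0_T: "face True (flip 0 C) = face False C"
  by (simp add: face_def flip_def)

lemma face_flip0_F: "face False (flip 0 C) = (\<lambda>\<beta>. [:0,1:] * face True C \<beta>)"
  by (simp add: face_def flip_def)

lemma face_foldr: "face v (foldr flip (map Suc xs) C) = foldr flip xs (face v C)"
  by (induction xs) (simp_all add: face_flip_Suc)

lemma sorted_Suc:
  assumes "finite T"
  shows "0 \<notin> T \<Longrightarrow> sorted_list_of_set T = map Suc (sorted_list_of_set {i. Suc i \<in> T})"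
    and "0 \<in> T \<Longrightarrow> sorted_list_of_set T = 0 # map Suc (sorted_list_of_set {i. Suc i \<in> T})"
proof -
  define T' where "T' = {i. Suc i \<in> T}"
  have fT': "finite T'" unfolding T'_def using assms by (rule finite_vimageI[of _ Suc, unfolded vimage_def]) simp
  define L where "L = sorted_list_of_set T'"
  have L: "sorted_wrt (<) L" "set L = T'" "length L = card T'"
    using fT' by (simp_all add: L_def)
  have sm: "sorted_wrt (<) (map Suc L)" using L(1) by (simp add: sorted_wrt_map)
  {
    assume "0 \<notin> T"
    then have eq: "Suc ` T' = T" unfolding T'_def by (auto, metis not0_implies_Suc imageI mem_Collect_eq)
    have "sorted_wrt (<) (map Suc L) \<and> set (map Suc L) = T \<and> length (map Suc L) = card T"
      using sm L eq by (auto simp: card_image)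
    then have "sorted_list_of_set T = map Suc L" by (rule sorted_list_of_set_unique[OF assms, THEN iffD1])
    then show "sorted_list_of_set T = map Suc (sorted_list_of_set {i. Suc i \<in> T})"
      by (simp add: L_def T'_def)
  }
  {
    assume "0 \<in> T"
    then have eq: "insert 0 (Suc ` T') = T" unfolding T'_def by (auto, metis not0_implies_Suc imageI mem_Collect_eq)
    have "sorted_wrt (<) (0 # map Suc L) \<and> set (0 # map Suc L) = T \<and> length (0 # map Suc L) = card T"
      using sm L eq fT' by (auto simp: card_image card_insert_if)
    then have "sorted_list_of_set T = 0 # map Suc L" by (rule sorted_list_of_set_unique[OF assms, THEN iffD1])
    then show "sorted_list_of_set T = 0 # map Suc (sorted_list_of_set {i. Suc i \<in> T})"
      by (simp add: L_def T'_def)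
  }
qed

lemma face_flipS:
  assumes "finite T"
  shows "0 \<notin> T \<Longrightarrow> face v (flipS T C) = flipS {i. Suc i \<in> T} (face v C)"
    and "0 \<in> T \<Longrightarrow> face True (flipS T C) = flipS {i. Suc i \<in> T} (face False C)"
    and "0 \<in> T \<Longrightarrow> face False (flipS T C) = (\<lambda>\<beta>. [:0,1:] * flipS {i. Suc i \<in> T} (face True C) \<beta>)"
  using sorted_Suc[OF assms]
  by (simp_all add: flipS_def face_foldr face_flip0_T face_flip0_F)

lemma flip_add: "flip i (\<lambda>\<alpha>. X \<alpha> + Y \<alpha>) = (\<lambda>\<alpha>. flip i X \<alpha> + flip i Y \<alpha>)"
  by (simp add: flip_def fun_eq_iff algebra_simps)

lemma foldr_flip_add: "foldr flip xs (\<lambda>\<alpha>. X \<alpha> + Y \<alpha>) = (\<lambda>\<alpha>. foldr flip xs X \<alpha> + foldr flip xs Y \<alpha>)"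
  by (induction xs) (simp_all add: flip_add)

lemma flipS_add: "flipS T (\<lambda>\<alpha>. X \<alpha> + Y \<alpha>) = (\<lambda>\<alpha>. flipS T X \<alpha> + flipS T Y \<alpha>)"
  by (simp add: flipS_def foldr_flip_add)

lemma foldr_flip_local:
  "(\<forall>\<alpha>. length \<alpha> = n \<longrightarrow> X \<alpha> = Y \<alpha>) \<Longrightarrow> (\<forall>\<alpha>. length \<alpha> = n \<longrightarrow> foldr flip xs X \<alpha> = foldr flip xs Y \<alpha>)"
  by (induction xs) (auto simp: flip_def)

lemma foldr_flip_nonneg:
  "(\<forall>\<alpha>. length \<alpha> = n \<longrightarrow> nonneg (X \<alpha>)) \<Longrightarrow> (\<forall>\<alpha>. length \<alpha> = n \<longrightarrow> nonneg (foldr flip xs X \<alpha>))"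
  by (induction xs) (auto simp: flip_def intro: nonneg_pCons0)

lemma foldr_flip_nonzero:
  "(\<forall>i\<in>set xs. i < n) \<Longrightarrow> (\<exists>\<alpha>. length \<alpha> = n \<and> X \<alpha> \<noteq> 0) \<Longrightarrow> (\<exists>\<alpha>. length \<alpha> = n \<and> foldr flip xs X \<alpha> \<noteq> 0)"
proof (induction xs)
  case Nil then show ?case by simp
next
  case (Cons i xs)
  then obtain \<beta> where \<beta>: "length \<beta> = n" "foldr flip xs X \<beta> \<noteq> 0" by auto
  have i: "i < n" using Cons.prems by simp
  define \<alpha> where "\<alpha> = \<beta>[i := \<not> \<beta> ! i]"
  have l: "length \<alpha> = n" using \<beta> by (simp add: \<alpha>_def)
  have ai: "\<alpha> ! i = (\<not> \<beta> ! i)" using i \<beta> by (simp add: \<alpha>_def)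
  have up: "\<alpha>[i := \<beta> ! i] = \<beta>" by (simp add: \<alpha>_def)
  have "flip i (foldr flip xs X) \<alpha> \<noteq> 0"
  proof (cases "\<beta> ! i")
    case True
    then have "\<alpha>[i := True] = \<beta>" using up by simp
    then show ?thesis using True ai \<beta>(2) by (simp add: flip_def)
  next
    case False
    then have "\<alpha>[i := False] = \<beta>" using up by simp
    then show ?thesis using False ai \<beta>(2) by (simp add: flip_def)
  qed
  then show ?case using l by auto
qed

lemma interp_nonneg_nz:
  "(\<forall>\<alpha>. length \<alpha> = n \<longrightarrow> nonneg (X \<alpha>)) \<Longrightarrow> (\<forall>i<n. l i > 0 \<and> r i > 0) \<Longrightarrow>
   nonneg (interp n l r X) \<and> ((\<exists>\<alpha>. length \<alpha> = n \<and> X \<alpha> \<noteq> 0) \<longrightarrow> interp n l r X \<noteq> 0)"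
proof (induction n arbitrary: l r X)
  case 0 then show ?case by auto
next
  case (Suc n)
  define Y where "Y = interp1 (l 0) (r 0) X"
  have l0: "l 0 > 0" "r 0 > 0" using Suc.prems(2) by auto
  have nY: "\<forall>\<beta>. length \<beta> = n \<longrightarrow> nonneg (Y \<beta>)"
    using Suc.prems(1) l0 by (auto simp: Y_def interp1_def intro!: nonneg_add nonneg_smult)
  have pos': "\<forall>i<n. l (Suc i) > 0 \<and> r (Suc i) > 0" using Suc.prems(2) by auto
  have nzY: "\<exists>\<beta>. length \<beta> = n \<and> Y \<beta> \<noteq> 0" if "\<exists>\<alpha>. length \<alpha> = Suc n \<and> X \<alpha> \<noteq> 0"
  proof -
    from that obtain v \<beta> where vb: "length \<beta> = n" "X (v # \<beta>) \<noteq> 0" by (auto simp: length_Suc_conv)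
    have nT: "nonneg (X (True # \<beta>))" and nF: "nonneg (X (False # \<beta>))" using Suc.prems(1) vb(1) by auto
    have "Y \<beta> \<noteq> 0"
    proof (cases v)
      case True
      then show ?thesis using nonneg_comb_nz[OF nT nF _ l0(1) less_imp_le[OF l0(2)]] vb by (simp add: Y_def interp1_def)
    next
      case False
      then show ?thesis using nonneg_comb_nz[OF nF nT _ l0(2) less_imp_le[OF l0(1)]] vb
        by (simp add: Y_def interp1_def add.commute)
    qed
    then show ?thesis using vb by blast
  qed
  from Suc.IH[OF nY pos'] nzY show ?case by (simp add: Y_def)
qed

lemma entries_nonneg:
  "(\<forall>l r. (\<forall>i<n. l i > 0 \<and> r i > 0) \<longrightarrow> nonneg (interp n l r X)) \<Longrightarrow>
   \<forall>\<alpha>. length \<alpha> = n \<longrightarrow> nonneg (X \<alpha>)"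
proof (induction n arbitrary: X)
  case 0
  then show ?case by simp
next
  case (Suc n)
  show ?case
  proof (intro allI impI)
    fix \<alpha> :: "bool list" assume "length \<alpha> = Suc n"
    then obtain v \<beta> where \<alpha>: "\<alpha> = v # \<beta>" "length \<beta> = n" by (auto simp: length_Suc_conv)
    have "nonneg (smult l0 (X (True # \<beta>)) + smult r0 (X (False # \<beta>)))" if "l0 > 0" "r0 > 0" for l0 r0
    proof -
      have "\<forall>l' r'. (\<forall>i<n. l' i > 0 \<and> r' i > 0) \<longrightarrow> nonneg (interp n l' r' (interp1 l0 r0 X))"
      proof (intro allI impI)
        fix l' r' :: "nat \<Rightarrow> real" assume p: "\<forall>i<n. l' i > 0 \<and> r' i > 0"
        define l where "l i = (case i of 0 \<Rightarrow> l0 | Suc j \<Rightarrow> l' j)" for i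
        define r where "r i = (case i of 0 \<Rightarrow> r0 | Suc j \<Rightarrow> r' j)" for i
        have "\<forall>i<Suc n. l i > 0 \<and> r i > 0" using p that by (auto simp: l_def r_def split: nat.split)
        then have "nonneg (interp (Suc n) l r X)" using Suc.prems by blast
        moreover have "(\<lambda>i. l (Suc i)) = l'" "(\<lambda>i. r (Suc i)) = r'" "l 0 = l0" "r 0 = r0"
          by (simp_all add: l_def r_def fun_eq_iff)
        ultimately show "nonneg (interp n l' r' (interp1 l0 r0 X))" by simp
      qed
      from Suc.IH[OF this] \<alpha>(2) show ?thesis by (simp add: interp1_def)
    qed
    then have "nonneg (X (True # \<beta>)) \<and> nonneg (X (False # \<beta>))" by (intro nonneg_two_weight) auto
    then show "nonneg (X \<alpha>)" using \<alpha> by (cases v) auto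
  qed
qed

lemma interp_flipS_split:
  assumes "finite T"
  shows "interp (Suc n) l r (flipS T C) =
    (if 0 \<in> T then
       smult (l 0) (interp n (\<lambda>i. l (Suc i)) (\<lambda>i. r (Suc i)) (flipS {i. Suc i \<in> T} (face False C)))
       + smult (r 0) ([:0,1:] * interp n (\<lambda>i. l (Suc i)) (\<lambda>i. r (Suc i)) (flipS {i. Suc i \<in> T} (face True C)))
     else
       smult (l 0) (interp n (\<lambda>i. l (Suc i)) (\<lambda>i. r (Suc i)) (flipS {i. Suc i \<in> T} (face True C)))
       + smult (r 0) (interp n (\<lambda>i. l (Suc i)) (\<lambda>i. r (Suc i)) (flipS {i. Suc i \<in> T} (face False C))))"
proof (cases "0 \<in> T")
  case True
  show ?thesis using True
    by (simp only: interp_Suc_split face_flipS(2,3)[OF assms True] interp_mult True if_True)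
next
  case False
  show ?thesis using False
    by (simp only: interp_Suc_split face_flipS(1)[OF assms False] False if_False)
qed

lemma K_of_cube:
  assumes C: "interpolatory_cube (Suc n) C"
    and pos: "\<forall>i<n. l (Suc i) > 0 \<and> r (Suc i) > 0" and T': "T' \<subseteq> {..<n}"
  shows "K (interp n (\<lambda>i. l (Suc i)) (\<lambda>i. r (Suc i)) (flipS T' (face True C)))
           (interp n (\<lambda>i. l (Suc i)) (\<lambda>i. r (Suc i)) (flipS T' (face False C)))"
  unfolding K_def
proof (intro allI impI)
  fix l0 r0 :: real assume l0: "l0 > 0" and r0: "r0 > 0"
  define ls where "ls = l(0 := l0)"
  define rs where "rs = r(0 := r0)"
  have ps: "\<forall>i<Suc n. ls i > 0 \<and> rs i > 0"
    using pos l0 r0 by (auto simp: ls_def rs_def less_Suc_eq_0_disj)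
  have sh: "(\<lambda>i. ls (Suc i)) = (\<lambda>i. l (Suc i))" "(\<lambda>i. rs (Suc i)) = (\<lambda>i. r (Suc i))" "ls 0 = l0" "rs 0 = r0"
    by (simp_all add: ls_def rs_def)
  have fin: "finite T'" using T' finite_subset by blast
  have eq1: "{i. Suc i \<in> Suc ` T'} = T'" by auto
  have eq2: "{i. Suc i \<in> insert 0 (Suc ` T')} = T'" by auto
  have s1: "Suc ` T' \<subseteq> {..<Suc n}" using T' by auto
  have s2: "insert 0 (Suc ` T') \<subseteq> {..<Suc n}" using T' by auto
  have g1: "good (interp (Suc n) ls rs (flipS (Suc ` T') C))"
    using C ps s1 unfolding interpolatory_cube_def good_def by blast
  have g2: "good (interp (Suc n) ls rs (flipS (insert 0 (Suc ` T')) C))"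
    using C ps s2 unfolding interpolatory_cube_def good_def by blast
  show "good (smult l0 (interp n (\<lambda>i. l (Suc i)) (\<lambda>i. r (Suc i)) (flipS T' (face True C))) +
              smult r0 (interp n (\<lambda>i. l (Suc i)) (\<lambda>i. r (Suc i)) (flipS T' (face False C)))) \<and>
        good (smult l0 (interp n (\<lambda>i. l (Suc i)) (\<lambda>i. r (Suc i)) (flipS T' (face False C))) +
              smult r0 ([:0, 1:] * interp n (\<lambda>i. l (Suc i)) (\<lambda>i. r (Suc i)) (flipS T' (face True C))))"
    using g1 g2 fin
    by (simp only: interp_flipS_split[OF finite_imageI[OF fin]] interp_flipS_split[OF finite.insertI[OF finite_imageI[OF fin]]]
        eq1 eq2 sh) simp
qed

lemma flipS_empty: "flipS {} C = C" by (simp add: flipS_def)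

theorem lemma4p7:
  fixes k :: nat and P Q :: "bool list \<Rightarrow> real poly"
  assumes "k \<ge> 1"
    and "\<forall>\<alpha>. length \<alpha> = k - 1 \<longrightarrow> P (True # \<alpha>) = Q (True # \<alpha>)"
    and "\<exists>\<alpha>. length \<alpha> = k - 1 \<and> P (True # \<alpha>) \<noteq> 0"
    and "interpolatory_cube k P" and "interpolatory_cube k Q"
  shows "interpolatory_cube k
           (\<lambda>\<alpha>. if \<alpha> \<noteq> [] \<and> hd \<alpha> then P \<alpha> else P \<alpha> + Q \<alpha>)"
proof -
  obtain n where k: "k = Suc n" using assms(1) by (cases k) auto
  define SC where "SC = (\<lambda>\<alpha>. if \<alpha> \<noteq> [] \<and> hd \<alpha> then P \<alpha> else P \<alpha> + Q \<alpha>)"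
  have hP: "interpolatory_cube (Suc n) P" and hQ: "interpolatory_cube (Suc n) Q" using assms(4,5) k by auto
  have agree: "\<forall>\<alpha>. length \<alpha> = n \<longrightarrow> face True P \<alpha> = face True Q \<alpha>" using assms(2) k by (simp add: face_def)
  have nzP: "\<exists>\<alpha>. length \<alpha> = n \<and> face True P \<alpha> \<noteq> 0" using assms(3) k by (simp add: face_def)
  have nnP: "\<forall>\<alpha>. length \<alpha> = Suc n \<longrightarrow> nonneg (P \<alpha>)"
  proof (rule entries_nonneg, intro allI impI)
    fix l r :: "nat \<Rightarrow> real" assume "\<forall>i<Suc n. l i > 0 \<and> r i > 0"
    then have "good (interp (Suc n) l r (flipS {} P))" using hP unfolding interpolatory_cube_def good_def by blast
    then show "nonneg (interp (Suc n) l r P)" by (simp add: flipS_empty good_nonneg)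
  qed
  have fT: "face True SC = face True P" by (simp add: SC_def face_def)
  have fF: "face False SC = (\<lambda>\<beta>. face False P \<beta> + face False Q \<beta>)" by (simp add: SC_def face_def)
  have "interpolatory_cube (Suc n) SC"
    unfolding interpolatory_cube_def
  proof (intro allI impI)
    fix l r :: "nat \<Rightarrow> real" and T :: "nat set"
    assume pos: "\<forall>i<Suc n. l i > 0 \<and> r i > 0" and T: "T \<subseteq> {..<Suc n}"
    define T' where "T' = {i. Suc i \<in> T}"
    have T': "T' \<subseteq> {..<n}" using T by (auto simp: T'_def)
    have finT: "finite T" using T finite_subset by blast
    have finT': "finite T'" using T' finite_subset by blast
    have pos': "\<forall>i<n. l (Suc i) > 0 \<and> r (Suc i) > 0" using pos by auto
    define J where "J X = interp n (\<lambda>i. l (Suc i)) (\<lambda>i. r (Suc i)) (flipS T' X)" for X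
    define a where "a = J (face True P)"
    define bP where "bP = J (face False P)"
    define bQ where "bQ = J (face False Q)"
    have KP: "K a bP" using K_of_cube[OF hP pos' T'] by (simp add: a_def bP_def J_def)
    have aQ: "J (face True Q) = a"
      unfolding a_def J_def flipS_def
      by (rule interp_local, rule foldr_flip_local) (use agree in auto)
    have KQ: "K a bQ" using K_of_cube[OF hQ pos' T'] aQ by (simp add: bQ_def J_def)
    have a0: "a \<noteq> 0"
    proof -
      have nn: "\<forall>\<alpha>. length \<alpha> = n \<longrightarrow> nonneg (face True P \<alpha>)" using nnP by (simp add: face_def)
      have nn': "\<forall>\<alpha>. length \<alpha> = n \<longrightarrow> nonneg (flipS T' (face True P) \<alpha>)"
        unfolding flipS_def by (rule foldr_flip_nonneg[OF nn])
      have "\<forall>i\<in>set (sorted_list_of_set T'). i < n" using T' finT' by auto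
      from foldr_flip_nonzero[OF this nzP]
      have nz': "\<exists>\<alpha>. length \<alpha> = n \<and> flipS T' (face True P) \<alpha> \<noteq> 0" by (simp add: flipS_def)
      from interp_nonneg_nz[OF nn' pos'] nz' show ?thesis by (simp add: a_def J_def)
    qed
    have Kbc: "K a (bP + bQ)" by (rule core[OF KP KQ a0])
    have bS: "J (face False SC) = bP + bQ"
      by (simp add: J_def bP_def bQ_def fF flipS_add interp_add)
    have aS: "J (face True SC) = a" by (simp add: a_def fT)
    have l0: "l 0 > 0" "r 0 > 0" using pos by auto
    have "good (interp (Suc n) l r (flipS T SC))"
    proof (cases "0 \<in> T")
      case True
      have "interp (Suc n) l r (flipS T SC) = smult (l 0) (J (face False SC)) + smult (r 0) ([:0,1:] * J (face True SC))"
        unfolding J_def T'_def by (simp only: interp_flipS_split[OF finT] True if_True)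
      then have "interp (Suc n) l r (flipS T SC) = smult (l 0) (bP + bQ) + smult (r 0) ([:0,1:] * a)"
        using bS aS by simp
      then show ?thesis using Kbc l0 unfolding K_def by simp
    next
      case False
      have "interp (Suc n) l r (flipS T SC) = smult (l 0) (J (face True SC)) + smult (r 0) (J (face False SC))"
        unfolding J_def T'_def by (simp only: interp_flipS_split[OF finT] False if_False)
      then have "interp (Suc n) l r (flipS T SC) = smult (l 0) a + smult (r 0) (bP + bQ)"
        using bS aS by simp
      then show ?thesis using Kbc l0 unfolding K_def by simp
    qed
    then show "standard (interp (Suc n) l r (flipS T SC)) \<and> nonpos_zeros (interp (Suc n) l r (flipS T SC))"
      by (simp add: good_def)
  qed
  then show ?thesis using k by (simp add: SC_def)
qed

end
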